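(* Let $S:\overline{\mathcal{D}}\to\widehat{\mathbb{C}}$ be a weak B-involution with $\mathcal{D}=\bigsqcup_{i=1}^k\Omega_i$, with welded surface $\Sigma$, involution $\eta$ and welding graph $\mathcal{G}$. Let $\mathcal{C}_\Sigma$ be a component of $\Sigma$ and $\mathcal{C}_\mathcal{G}$ the corresponding component of $\mathcal{G}$, with vertex set $\{v_{i_1}^-,\dots,v_{i_\alpha}^-,v_{j_1}^+,\dots,v_{j_\beta}^+\}$. Then the following are equivalent: (a) $\eta(\mathcal{C}_\Sigma)=\mathcal{C}_\Sigma$; (b) $\widehat\eta(\mathcal{C}_\mathcal{G})=\mathcal{C}_\mathcal{G}$; (c) $\{i_1,\dots,i_\alpha\}=\{j_1,\dots,j_\beta\}$; (d) $\{i_1,\dots,i_\alpha\}\cap\{j_1,\dots,j_\beta\}\ne\emptyset$.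
   Context: $\Omega_1,\dots,\Omega_k$ are pairwise disjoint finitely connected proper subdomains of $\widehat{\mathbb{C}}$ with $\mathrm{int}(\overline{\Omega_i})=\Omega_i$; $X\subset\partial\mathcal{D}$ finite with $\partial^0\mathcal{D}=\partial\mathcal{D}\setminus X$ a finite union of disjoint non-singular real-analytic curves; $S$ continuous on $\overline{\mathcal{D}}$, meromorphic on $\mathcal{D}$, mapping $\partial\mathcal{D}$ and $X$ to themselves with $S\circ S=\mathrm{id}$ on $\partial\mathcal{D}$, orientation-reversing on $\partial^0\mathcal{D}$. Set $\partial^0\Omega_i=\partial^0\mathcal{D}\cap\overline{\Omega_i}$. The welded surface $\Sigma$ is the compactification of the Riemann surface obtained from two copies of $\mathcal{D}\cup\partial^0\mathcal{D}$ by identifying $x\in\partial^0\mathcal{D}$ in the first copy with $S(x)$ in the second; $\Omega_i^-$ and $\Omega_i^+$ denote the copies of $\Omega_i$ in the first and second copy, and $\eta$ is the conformal involution of $\Sigma$ interchanging the two copies (sending the point $x$ of the first copy to the point $x$ of the second copy), so $\eta(\Omega_i^-)=\Omega_i^+$. The welding graph $\mathcal{G}$ has vertices $v_i^\pm$ with edges exactly between $v_{i_1}^-$ and $v_{i_2}^+$ when $S(\partial^0\Omega_{i_1})\cap\partial^0\Omega_{i_2}\neq\emptyset$; vertex $v_i^\pm$ corresponds to $\Omega_i^\pm$, and the component $\mathcal{C}_\mathcal{G}$ corresponds to $\mathcal{C}_\Sigma$ when $\mathcal{C}_\Sigma\setminus\partial\mathfrak{D}$ is the union of the $\Omega_i^\pm$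 for $v_i^\pm\in\mathcal{C}_\mathcal{G}$ ($\mathfrak{D}$ the first copy of $\mathcal{D}$). $\widehat\eta$ is the involution of the vertex set with $\widehat\eta(v_i^\pm)=v_i^\mp$. *)

theory Defs
  imports "HOL-Analysis.Analysis"
begin

section \<open>The Riemann sphere, modelled as the unit sphere in C x R\<close>

type_synonym sp = "complex \<times> real"

definition RS :: "sp set" where "RS = sphere 0 1"

definition pole :: "bool \<Rightarrow> sp" where
  "pole a = (0, if a then 1 else -1)"

text \<open>Stereographic charts (holomorphically compatible: chart False = 1 / chart True)\<close>
definition chart :: "bool \<Rightarrow> sp \<Rightarrow> complex" where
  "chart a p = (if a then fst p / complex_of_real (1 - snd p)
                else cnj (fst p) / complex_of_real (1 + snd p))"

definition chart_inv :: "bool \<Rightarrow> complex \<Rightarrow> sp" where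
  "chart_inv a z = (if a then (2 * z / complex_of_real ((cmod z)\<^sup>2 + 1), ((cmod z)\<^sup>2 - 1) / ((cmod z)\<^sup>2 + 1))
                    else (2 * cnj z / complex_of_real ((cmod z)\<^sup>2 + 1), (1 - (cmod z)\<^sup>2) / ((cmod z)\<^sup>2 + 1)))"

text \<open>f is holomorphic (as a map into the Riemann sphere) near p, i.e. meromorphic at p\<close>
definition sph_holo_at :: "(sp \<Rightarrow> sp) \<Rightarrow> sp \<Rightarrow> bool" where
  "sph_holo_at f p \<longleftrightarrow> (\<exists>a b r. p \<noteq> pole a \<and> f p \<noteq> pole b \<and> r > 0 \<and>
      (\<forall>z\<in>ball (chart a p) r. f (chart_inv a z) \<noteq> pole b) \<and>
      (\<lambda>z. chart b (f (chart_inv a z))) holomorphic_on ball (chart a p) r)"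

definition sph_meromorphic_on :: "(sp \<Rightarrow> sp) \<Rightarrow> sp set \<Rightarrow> bool" where
  "sph_meromorphic_on f D \<longleftrightarrow> (\<forall>p\<in>D. sph_holo_at f p)"

definition fc_proper_domain :: "sp set \<Rightarrow> bool" where
  "fc_proper_domain \<Omega> \<longleftrightarrow> \<Omega> \<subseteq> RS \<and> \<Omega> \<noteq> RS \<and> \<Omega> \<noteq> {} \<and>
      openin (top_of_set RS) \<Omega> \<and> connected \<Omega> \<and> finite (components (RS - \<Omega>))"

definition real_analytic_on :: "(real \<Rightarrow> 'a::real_normed_vector) \<Rightarrow> real set \<Rightarrow> bool" where
  "real_analytic_on \<gamma> T \<longleftrightarrow> (\<forall>t\<in>T. \<exists>r>0. \<exists>c::nat \<Rightarrow> 'a.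
      \<forall>s. \<bar>s - t\<bar> < r \<longrightarrow> (\<lambda>n. ((s - t) ^ n) *\<^sub>R c n) sums \<gamma> s)"

definition regular_on :: "(real \<Rightarrow> 'a::real_normed_vector) \<Rightarrow> real set \<Rightarrow> bool" where
  "regular_on \<gamma> T \<longleftrightarrow> (\<forall>t\<in>T. \<exists>v. (\<gamma> has_vector_derivative v) (at t) \<and> v \<noteq> 0)"

text \<open>A non-singular real-analytic (embedded) curve: an open arc or a closed curve\<close>
definition analytic_curve :: "sp set \<Rightarrow> bool" where
  "analytic_curve C \<longleftrightarrow>
     (\<exists>\<gamma> a b. a < b \<and> real_analytic_on \<gamma> {a<..<b} \<and> regular_on \<gamma> {a<..<b} \<and>
        inj_on \<gamma> {a<..<b} \<and> C = \<gamma> ` {a<..<b} \<and> continuous_on C (inv_into {a<..<b} \<gamma>)) \<or>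
     (\<exists>\<gamma>. real_analytic_on \<gamma> UNIV \<and> regular_on \<gamma> UNIV \<and> (\<forall>t. \<gamma> (t + 1) = \<gamma> t) \<and>
        inj_on \<gamma> {0..<1} \<and> C = \<gamma> ` {0..1})"

text \<open>gamma is a positively oriented (D on the left, in chart a) local regular analytic
  parametrisation of the boundary piece B near x\<close>
definition pos_bparam :: "sp set \<Rightarrow> sp set \<Rightarrow> sp \<Rightarrow> (real \<Rightarrow> sp) \<Rightarrow> real \<Rightarrow> bool \<Rightarrow> bool" where
  "pos_bparam D B x \<gamma> r a \<longleftrightarrow> r > 0 \<and> \<gamma> 0 = x \<and> \<gamma> ` {-r<..<r} \<subseteq> B \<and>
     real_analytic_on \<gamma> {-r<..<r} \<and> regular_on \<gamma> {-r<..<r} \<and> inj_on \<gamma> {-r<..<r} \<and>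
     (\<forall>t\<in>{-r<..<r}. \<gamma> t \<noteq> pole a \<and>
        (\<exists>v. ((\<lambda>s. chart a (\<gamma> s)) has_vector_derivative v) (at t) \<and>
           (\<exists>e>0. \<forall>\<epsilon>. 0 < \<epsilon> \<and> \<epsilon> < e \<longrightarrow>
              chart_inv a (chart a (\<gamma> t) + complex_of_real \<epsilon> * \<i> * v) \<in> D)))"

definition orientation_reversing_on :: "(sp \<Rightarrow> sp) \<Rightarrow> sp set \<Rightarrow> sp set \<Rightarrow> bool" where
  "orientation_reversing_on S D B \<longleftrightarrow> (\<forall>x\<in>B. \<exists>\<gamma> \<delta> r a b h.
      pos_bparam D B x \<gamma> r a \<and> pos_bparam D B (S x) \<delta> r b \<and>
      h 0 = 0 \<and> continuous_on {-r<..<r} h \<and> h ` {-r<..<r} \<subseteq> {-r<..<r} \<and>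
      (\<forall>s\<in>{-r<..<r}. \<forall>t\<in>{-r<..<r}. s < t \<longrightarrow> h t < h s) \<and>
      (\<forall>t\<in>{-r<..<r}. S (\<gamma> t) = \<delta> (h t)))"

definition bdD :: "sp set \<Rightarrow> sp set" where "bdD D = closure D - D"

definition weak_B_involution ::
  "nat \<Rightarrow> (nat \<Rightarrow> sp set) \<Rightarrow> sp set \<Rightarrow> (sp \<Rightarrow> sp) \<Rightarrow> bool" where
  "weak_B_involution k \<Omega> X S \<longleftrightarrow>
     (let D = (\<Union>i\<in>{1..k}. \<Omega> i); B = bdD D - X in
      (\<forall>i\<in>{1..k}. fc_proper_domain (\<Omega> i) \<and>
          (top_of_set RS) interior_of (closure (\<Omega> i)) = \<Omega> i) \<and>
      (\<forall>i\<in>{1..k}. \<forall>j\<in>{1..k}. i \<noteq> j \<longrightarrow> \<Omega> i \<inter> \<Omega> j = {}) \<and>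
      finite X \<and> X \<subseteq> bdD D \<and>
      (\<exists>\<C>. finite \<C> \<and> (\<forall>C\<in>\<C>. analytic_curve C) \<and> pairwise disjnt \<C> \<and> \<Union>\<C> = B) \<and>
      continuous_on (closure D) S \<and> S ` closure D \<subseteq> RS \<and>
      sph_meromorphic_on S D \<and>
      S ` bdD D \<subseteq> bdD D \<and> S ` X \<subseteq> X \<and> (\<forall>x\<in>bdD D. S (S x) = x) \<and>
      orientation_reversing_on S D B)"

definition qtop :: "'a topology \<Rightarrow> ('a \<Rightarrow> 'a set) \<Rightarrow> 'a set topology" where
  "qtop X cl = topology (\<lambda>U. U \<subseteq> cl ` topspace X \<and> openin X {x \<in> topspace X. cl x \<in> U})"

section \<open>The welded surface (without its finitely many compactification points)\<close>

definition wD :: "nat \<Rightarrow> (nat \<Rightarrow> sp set) \<Rightarrow> sp set" where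
  "wD k \<Omega> = (\<Union>i\<in>{1..k}. \<Omega> i)"

text \<open>boundary minus X, i.e. the real-analytic part of the boundary\<close>
definition wB :: "nat \<Rightarrow> (nat \<Rightarrow> sp set) \<Rightarrow> sp set \<Rightarrow> sp set" where
  "wB k \<Omega> X = bdD (wD k \<Omega>) - X"

text \<open>(False, x) is x in the first copy, (True, x) is x in the second copy\<close>
definition wpts :: "nat \<Rightarrow> (nat \<Rightarrow> sp set) \<Rightarrow> sp set \<Rightarrow> (bool \<times> sp) set" where
  "wpts k \<Omega> X = UNIV \<times> (wD k \<Omega> \<union> wB k \<Omega> X)"

definition wrel :: "nat \<Rightarrow> (nat \<Rightarrow> sp set) \<Rightarrow> sp set \<Rightarrow> (sp \<Rightarrow> sp) \<Rightarrow> bool \<times> sp \<Rightarrow> bool \<times> sp \<Rightarrow> bool" where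
  "wrel k \<Omega> X S p q \<longleftrightarrow> p = q \<or> (\<exists>x\<in>wB k \<Omega> X.
       (p = (False, x) \<and> q = (True, S x)) \<or> (p = (True, S x) \<and> q = (False, x)))"

definition wclass :: "nat \<Rightarrow> (nat \<Rightarrow> sp set) \<Rightarrow> sp set \<Rightarrow> (sp \<Rightarrow> sp) \<Rightarrow> bool \<times> sp \<Rightarrow> (bool \<times> sp) set" where
  "wclass k \<Omega> X S p = {q \<in> wpts k \<Omega> X. wrel k \<Omega> X S p q}"

definition welded_surface :: "nat \<Rightarrow> (nat \<Rightarrow> sp set) \<Rightarrow> sp set \<Rightarrow> (sp \<Rightarrow> sp) \<Rightarrow> (bool \<times> sp) set topology" where
  "welded_surface k \<Omega> X S =
     qtop (subtopology (prod_topology (discrete_topology UNIV) (top_of_set RS)) (wpts k \<Omega> X))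
          (wclass k \<Omega> X S)"

definition weta :: "(bool \<times> sp) set \<Rightarrow> (bool \<times> sp) set" where
  "weta c = (\<lambda>(b, x). (\<not> b, x)) ` c"

text \<open>the copy Omega_i^- (b = False) or Omega_i^+ (b = True) inside the welded surface\<close>
definition wcopy :: "nat \<Rightarrow> (nat \<Rightarrow> sp set) \<Rightarrow> sp set \<Rightarrow> (sp \<Rightarrow> sp) \<Rightarrow> bool \<times> nat \<Rightarrow> (bool \<times> sp) set set" where
  "wcopy k \<Omega> X S v = wclass k \<Omega> X S ` ({fst v} \<times> \<Omega> (snd v))"

text \<open>the boundary of the first copy of D inside the welded surface (the seam)\<close>
definition wseam :: "nat \<Rightarrow> (nat \<Rightarrow> sp set) \<Rightarrow> sp set \<Rightarrow> (sp \<Rightarrow> sp) \<Rightarrow> (bool \<times> sp) set set" where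
  "wseam k \<Omega> X S = wclass k \<Omega> X S ` ({False} \<times> wB k \<Omega> X)"

text \<open>vertex (False, i) is v_i^-, vertex (True, i) is v_i^+\<close>
definition gverts :: "nat \<Rightarrow> (bool \<times> nat) set" where
  "gverts k = UNIV \<times> {1..k}"

definition bd0 :: "nat \<Rightarrow> (nat \<Rightarrow> sp set) \<Rightarrow> sp set \<Rightarrow> nat \<Rightarrow> sp set" where
  "bd0 k \<Omega> X i = wB k \<Omega> X \<inter> closure (\<Omega> i)"

definition gedges :: "nat \<Rightarrow> (nat \<Rightarrow> sp set) \<Rightarrow> sp set \<Rightarrow> (sp \<Rightarrow> sp) \<Rightarrow> ((bool \<times> nat) \<times> (bool \<times> nat)) set" where
  "gedges k \<Omega> X S =
     {((False, i), (True, j)) | i j. i \<in> {1..k} \<and> j \<in> {1..k} \<and> S ` bd0 k \<Omega> X i \<inter> bd0 k \<Omega> X j \<noteq> {}} \<union>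
     {((True, j), (False, i)) | i j. i \<in> {1..k} \<and> j \<in> {1..k} \<and> S ` bd0 k \<Omega> X i \<inter> bd0 k \<Omega> X j \<noteq> {}}"

definition graph_component :: "nat \<Rightarrow> (nat \<Rightarrow> sp set) \<Rightarrow> sp set \<Rightarrow> (sp \<Rightarrow> sp) \<Rightarrow> (bool \<times> nat) set \<Rightarrow> bool" where
  "graph_component k \<Omega> X S CG \<longleftrightarrow>
     (\<exists>v\<in>gverts k. CG = {w \<in> gverts k. (v, w) \<in> (gedges k \<Omega> X S)\<^sup>*})"

definition eta_hat :: "bool \<times> nat \<Rightarrow> bool \<times> nat" where
  "eta_hat v = (\<not> fst v, snd v)"

end

theory Submission
  imports Defs
begin

lemma qtop_open:
  "openin (qtop X cl) U \<longleftrightarrow> U \<subseteq> cl ` topspace X \<and> openin X {x \<in> topspace X. cl x \<in> U}"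
proof -
  have istop: "istopology (\<lambda>U. U \<subseteq> cl ` topspace X \<and> openin X {x \<in> topspace X. cl x \<in> U})"
    (is "istopology ?L")
  proof -
    have A: "\<forall>S T. ?L S \<longrightarrow> ?L T \<longrightarrow> ?L (S \<inter> T)"
    proof (intro allI impI)
      fix S T assume a: "?L S" "?L T"
      have "{x \<in> topspace X. cl x \<in> S \<inter> T} = {x \<in> topspace X. cl x \<in> S} \<inter> {x \<in> topspace X. cl x \<in> T}"
        by auto
      moreover have "openin X ({x \<in> topspace X. cl x \<in> S} \<inter> {x \<in> topspace X. cl x \<in> T})"
        using a by (intro openin_Int) simp_all
      moreover have "S \<inter> T \<subseteq> cl ` topspace X" using a by blast
      ultimately show "?L (S \<inter> T)" by simp
    qed
    have B: "\<forall>K. (\<forall>S\<in>K. ?L S) \<longrightarrow> ?L (\<Union>K)"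
    proof (intro allI impI)
      fix K assume a: "\<forall>S\<in>K. ?L S"
      have "{x \<in> topspace X. cl x \<in> \<Union>K} = (\<Union>S\<in>K. {x \<in> topspace X. cl x \<in> S})"
        by auto
      moreover have "openin X (\<Union>S\<in>K. {x \<in> topspace X. cl x \<in> S})"
        using a by (intro openin_Union) blast
      moreover have "\<Union>K \<subseteq> cl ` topspace X" using a by blast
      ultimately show "?L (\<Union>K)" by simp
    qed
    show ?thesis unfolding istopology_def by (rule conjI[OF A B])
  qed
  have "openin (qtop X cl) = (\<lambda>U. U \<subseteq> cl ` topspace X \<and> openin X {x \<in> topspace X. cl x \<in> U})"
    unfolding qtop_def using istop by (rule topology_inverse')
  then show ?thesis by (rule fun_cong[THEN trans]) simp
qed

lemma qtop_topspace: "topspace (qtop X cl) = cl ` topspace X"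
proof (rule subset_antisym)
  have e: "{x \<in> topspace X. cl x \<in> cl ` topspace X} = topspace X" by auto
  have "openin (qtop X cl) (cl ` topspace X)"
    unfolding qtop_open e by (intro conjI subset_refl openin_topspace)
  then show "cl ` topspace X \<subseteq> topspace (qtop X cl)" by (rule openin_subset)
  show "topspace (qtop X cl) \<subseteq> cl ` topspace X"
  proof
    fix c assume "c \<in> topspace (qtop X cl)"
    then obtain U where "openin (qtop X cl) U" "c \<in> U" unfolding topspace_def by blast
    then show "c \<in> cl ` topspace X" unfolding qtop_open by blast
  qed
qed

definition fl :: "bool \<times> sp \<Rightarrow> bool \<times> sp" where "fl p = (\<not> fst p, snd p)"

lemma fl_fl[simp]: "fl (fl p) = p" by (simp add: fl_def)

lemma weta_fl: "weta c = fl ` c"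
  unfolding weta_def fl_def by (auto simp: case_prod_beta)

lemma fl_cont: "continuous_map (subtopology (prod_topology (discrete_topology UNIV) (top_of_set RS)) (UNIV \<times> A))
   (subtopology (prod_topology (discrete_topology UNIV) (top_of_set RS)) (UNIV \<times> A)) fl"
proof -
  have "continuous_map (prod_topology (discrete_topology UNIV) (top_of_set RS))
       (prod_topology (discrete_topology UNIV) (top_of_set RS)) fl"
    unfolding fl_def continuous_map_paired
  proof
    show "continuous_map (prod_topology (discrete_topology UNIV) (top_of_set RS)) (discrete_topology UNIV) (\<lambda>x. \<not> fst x)"
      using continuous_map_compose[OF continuous_map_fst[of "discrete_topology (UNIV::bool set)" "top_of_set RS"],
          of "discrete_topology UNIV" Not]
      by (simp add: o_def)
    show "continuous_map (prod_topology (discrete_topology UNIV) (top_of_set RS)) (top_of_set RS) snd"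
      by (rule continuous_map_snd)
  qed
  then show ?thesis
    by (auto simp: continuous_map_in_subtopology continuous_map_from_subtopology fl_def)
qed


lemma wbi_S:
  assumes "weak_B_involution k \<Omega> X S" "x \<in> wB k \<Omega> X"
  shows "S x \<in> wB k \<Omega> X \<and> S (S x) = x"
proof -
  have a: "S ` bdD (wD k \<Omega>) \<subseteq> bdD (wD k \<Omega>)" "S ` X \<subseteq> X" "\<forall>x\<in>bdD (wD k \<Omega>). S (S x) = x"
    using assms(1) unfolding weak_B_involution_def Let_def wD_def by auto
  have x: "x \<in> bdD (wD k \<Omega>)" "x \<notin> X" using assms(2) unfolding wB_def by auto
  have "S x \<in> bdD (wD k \<Omega>)" using a(1) x by blast
  moreover have "S x \<notin> X"
  proof
    assume "S x \<in> X" then have "S (S x) \<in> X" using a(2) by blast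
    then show False using a(3) x by auto
  qed
  ultimately show ?thesis using a(3) x unfolding wB_def by auto
qed

lemma wbi_basic:
  assumes "weak_B_involution k \<Omega> X S"
  shows "\<forall>i\<in>{1..k}. \<Omega> i \<noteq> {}"
    and "\<forall>i\<in>{1..k}. \<forall>j\<in>{1..k}. i \<noteq> j \<longrightarrow> \<Omega> i \<inter> \<Omega> j = {}"
  using assms unfolding weak_B_involution_def Let_def fc_proper_domain_def by auto

lemma wD_wB: "y \<in> wD k \<Omega> \<Longrightarrow> y \<notin> wB k \<Omega> X"
  unfolding wB_def bdD_def by auto

lemma wrel_fl:
  assumes S: "\<And>x. x \<in> wB k \<Omega> X \<Longrightarrow> S x \<in> wB k \<Omega> X \<and> S (S x) = x"
  shows "wrel k \<Omega> X S (fl p) (fl q) \<longleftrightarrow> wrel k \<Omega> X S p q"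
proof -
  have 1: "wrel k \<Omega> X S (fl p) (fl q)" if "wrel k \<Omega> X S p q" for p q
  proof -
    from that consider "p = q" | x where "x \<in> wB k \<Omega> X" "p = (False, x)" "q = (True, S x)"
      | x where "x \<in> wB k \<Omega> X" "p = (True, S x)" "q = (False, x)"
      unfolding wrel_def by blast
    then show ?thesis
    proof cases
      case 1 then show ?thesis unfolding wrel_def by simp
    next
      case (2 x)
      then have "S x \<in> wB k \<Omega> X" "S (S x) = x" using S by auto
      then show ?thesis unfolding wrel_def using 2 by (auto simp: fl_def intro!: bexI[of _ "S x"])
    next
      case (3 x)
      then have "S x \<in> wB k \<Omega> X" "S (S x) = x" using S by auto
      then show ?thesis unfolding wrel_def using 3 by (auto simp: fl_def intro!: bexI[of _ "S x"])
    qed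
  qed
  show ?thesis using 1[of p q] 1[of "fl p" "fl q"] by auto
qed

lemma wpts_fl: "fl p \<in> wpts k \<Omega> X \<longleftrightarrow> p \<in> wpts k \<Omega> X"
  unfolding wpts_def fl_def by (cases p) auto

lemma wclass_fl:
  assumes S: "\<And>x. x \<in> wB k \<Omega> X \<Longrightarrow> S x \<in> wB k \<Omega> X \<and> S (S x) = x"
  shows "wclass k \<Omega> X S (fl p) = fl ` wclass k \<Omega> X S p"
proof
  show "wclass k \<Omega> X S (fl p) \<subseteq> fl ` wclass k \<Omega> X S p"
  proof
    fix q assume "q \<in> wclass k \<Omega> X S (fl p)"
    then have "fl q \<in> wclass k \<Omega> X S p"
      unfolding wclass_def using wrel_fl[OF S, of p "fl q"] wpts_fl[of q] by auto
    then show "q \<in> fl ` wclass k \<Omega> X S p" by (metis fl_fl image_eqI)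
  qed
  show "fl ` wclass k \<Omega> X S p \<subseteq> wclass k \<Omega> X S (fl p)"
    unfolding wclass_def using wrel_fl[OF S, of p] wpts_fl by auto
qed

lemma weta_weta: "weta (weta c) = c"
  unfolding weta_fl image_image by simp

lemma wclass_self: "p \<in> wpts k \<Omega> X \<Longrightarrow> p \<in> wclass k \<Omega> X S p"
  unfolding wclass_def wrel_def by simp

lemma weta_cont:
  assumes S: "\<And>x. x \<in> wB k \<Omega> X \<Longrightarrow> S x \<in> wB k \<Omega> X \<and> S (S x) = x"
  shows "continuous_map (welded_surface k \<Omega> X S) (welded_surface k \<Omega> X S) weta"
proof -
  define T0 where "T0 = subtopology (prod_topology (discrete_topology UNIV) (top_of_set RS)) (wpts k \<Omega> X)"
  define cl where "cl = wclass k \<Omega> X S"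
  have W: "welded_surface k \<Omega> X S = qtop T0 cl" unfolding welded_surface_def T0_def cl_def ..
  have flc: "continuous_map T0 T0 fl" unfolding T0_def wpts_def by (rule fl_cont)
  have tsp: "fl p \<in> topspace T0 \<longleftrightarrow> p \<in> topspace T0" for p
    unfolding T0_def wpts_def by (cases p) (auto simp: fl_def)
  have wc: "weta (cl p) = cl (fl p)" for p
    unfolding weta_fl cl_def using wclass_fl[OF S] by simp
  show ?thesis unfolding W continuous_map_def
  proof (intro conjI allI impI)
    show "weta \<in> topspace (qtop T0 cl) \<rightarrow> topspace (qtop T0 cl)"
      unfolding qtop_topspace using wc tsp by auto
  next
    fix U assume U: "openin (qtop T0 cl) U"
    then have V: "openin T0 {p \<in> topspace T0. cl p \<in> U}" unfolding qtop_open by blast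
    have e: "{p \<in> topspace T0. cl p \<in> {c \<in> topspace (qtop T0 cl). weta c \<in> U}}
           = {p \<in> topspace T0. fl p \<in> {p \<in> topspace T0. cl p \<in> U}}"
      unfolding qtop_topspace using wc tsp by auto
    have "openin T0 {p \<in> topspace T0. fl p \<in> {p \<in> topspace T0. cl p \<in> U}}"
      using flc V by (rule openin_continuous_map_preimage)
    then show "openin (qtop T0 cl) {c \<in> topspace (qtop T0 cl). weta c \<in> U}"
      unfolding qtop_open e by (auto simp: qtop_topspace)
  qed
qed


lemma wrel_interior:
  assumes S: "\<And>x. x \<in> wB k \<Omega> X \<Longrightarrow> S x \<in> wB k \<Omega> X \<and> S (S x) = x"
    and yD: "y \<in> wD k \<Omega>" and r: "wrel k \<Omega> X S p (b, y)"
  shows "p = (b, y)"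
proof -
  have nB: "y \<notin> wB k \<Omega> X" using wD_wB[OF yD] .
  from r consider "p = (b, y)" | x where "x \<in> wB k \<Omega> X" "p = (False, x)" "(b, y) = (True, S x)"
      | x where "x \<in> wB k \<Omega> X" "p = (True, S x)" "(b, y) = (False, x)"
    unfolding wrel_def by blast
  then show ?thesis
  proof cases
    case 1 then show ?thesis .
  next
    case (2 x) then have "y = S x" by simp
    then show ?thesis using S[OF 2(1)] nB by simp
  next
    case (3 x) then have "y = x" by simp
    then show ?thesis using 3(1) nB by simp
  qed
qed

lemma bd0_sym:
  assumes S: "\<And>x. x \<in> wB k \<Omega> X \<Longrightarrow> S x \<in> wB k \<Omega> X \<and> S (S x) = x"
    and "S ` bd0 k \<Omega> X i \<inter> bd0 k \<Omega> X j \<noteq> {}"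
  shows "S ` bd0 k \<Omega> X j \<inter> bd0 k \<Omega> X i \<noteq> {}"
proof -
  obtain x where x: "x \<in> bd0 k \<Omega> X i" "S x \<in> bd0 k \<Omega> X j" using assms(2) by blast
  have "S (S x) = x" using S[of x] x(1) unfolding bd0_def by auto
  then have "x \<in> S ` bd0 k \<Omega> X j" using x(2) by (metis image_eqI)
  then show ?thesis using x(1) by blast
qed

lemma edge_eta:
  assumes S: "\<And>x. x \<in> wB k \<Omega> X \<Longrightarrow> S x \<in> wB k \<Omega> X \<and> S (S x) = x"
    and e: "(u, w) \<in> gedges k \<Omega> X S"
  shows "(eta_hat u, eta_hat w) \<in> gedges k \<Omega> X S"
proof -
  from e consider i j where "u = (False, i)" "w = (True, j)" "i \<in> {1..k}" "j \<in> {1..k}"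
        "S ` bd0 k \<Omega> X i \<inter> bd0 k \<Omega> X j \<noteq> {}"
    | i j where "u = (True, j)" "w = (False, i)" "i \<in> {1..k}" "j \<in> {1..k}"
        "S ` bd0 k \<Omega> X i \<inter> bd0 k \<Omega> X j \<noteq> {}"
    unfolding gedges_def by blast
  then show ?thesis
  proof cases
    case (1 i j)
    have c: "S ` bd0 k \<Omega> X j \<inter> bd0 k \<Omega> X i \<noteq> {}" by (rule bd0_sym[OF S 1(5)])
    have "eta_hat u = (True, i)" "eta_hat w = (False, j)" using 1 by (simp_all add: eta_hat_def)
    then show ?thesis using 1(3,4) c unfolding gedges_def by blast
  next
    case (2 i j)
    have c: "S ` bd0 k \<Omega> X j \<inter> bd0 k \<Omega> X i \<noteq> {}" by (rule bd0_sym[OF S 2(5)])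
    have "eta_hat u = (False, j)" "eta_hat w = (True, i)" using 2 by (simp_all add: eta_hat_def)
    then show ?thesis using 2(3,4) c unfolding gedges_def by blast
  qed
qed

lemma edge_sym: "(u, w) \<in> gedges k \<Omega> X S \<Longrightarrow> (w, u) \<in> gedges k \<Omega> X S"
  unfolding gedges_def by blast

lemma rtr_eta:
  assumes S: "\<And>x. x \<in> wB k \<Omega> X \<Longrightarrow> S x \<in> wB k \<Omega> X \<and> S (S x) = x"
    and "(u, w) \<in> (gedges k \<Omega> X S)\<^sup>*"
  shows "(eta_hat u, eta_hat w) \<in> (gedges k \<Omega> X S)\<^sup>*"
  using assms(2)
proof (induction rule: rtrancl_induct)
  case base then show ?case by simp
next
  case (step y z) then show ?case using edge_eta[OF S] by (meson rtrancl.simps)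
qed

lemma rtr_sym:
  assumes "(u, w) \<in> (gedges k \<Omega> X S)\<^sup>*"
  shows "(w, u) \<in> (gedges k \<Omega> X S)\<^sup>*"
proof -
  have "sym (gedges k \<Omega> X S)" unfolding sym_def using edge_sym by blast
  then have "sym ((gedges k \<Omega> X S)\<^sup>*)" by (rule sym_rtrancl)
  then show ?thesis using assms unfolding sym_def by blast
qed

lemma eta_hat_eta_hat[simp]: "eta_hat (eta_hat v) = v"
  unfolding eta_hat_def by simp

theorem lemma4p13:
  fixes k :: nat and \<Omega> :: "nat \<Rightarrow> sp set" and X :: "sp set" and S :: "sp \<Rightarrow> sp"
    and C\<Sigma> :: "(bool \<times> sp) set set" and CG :: "(bool \<times> nat) set"
  assumes "weak_B_involution k \<Omega> X S"
    and "C\<Sigma> \<in> connected_components_of (welded_surface k \<Omega> X S)"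
    and "graph_component k \<Omega> X S CG"
    and "C\<Sigma> - wseam k \<Omega> X S = (\<Union>v\<in>CG. wcopy k \<Omega> X S v)"
  defines "I \<equiv> {i. (False, i) \<in> CG}" and "J \<equiv> {j. (True, j) \<in> CG}"
  shows "(weta ` C\<Sigma> = C\<Sigma> \<longleftrightarrow> eta_hat ` CG = CG)
       \<and> (eta_hat ` CG = CG \<longleftrightarrow> I = J)
       \<and> (I = J \<longleftrightarrow> I \<inter> J \<noteq> {})"
proof -
  note wbi = assms(1)
  have S: "\<And>x. x \<in> wB k \<Omega> X \<Longrightarrow> S x \<in> wB k \<Omega> X \<and> S (S x) = x"
    using wbi_S[OF wbi] by blast
  have wi: "p = (b, y)" if "y \<in> wD k \<Omega>" "wrel k \<Omega> X S p (b, y)" for p b y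
  proof -
    have "\<forall>x\<in>wB k \<Omega> X. S x \<in> wB k \<Omega> X" using S by blast
    then show ?thesis using that wD_wB[OF that(1), of X] unfolding wrel_def by auto
  qed
  note nonemp = wbi_basic(1)[OF wbi] and disj = wbi_basic(2)[OF wbi]
  define E where "E = gedges k \<Omega> X S"
  obtain v0 where v0: "v0 \<in> gverts k" and CGd: "CG = {w \<in> gverts k. (v0, w) \<in> E\<^sup>*}"
    using assms(3) unfolding graph_component_def E_def by blast
  have v0CG: "v0 \<in> CG" using v0 CGd by simp
  have CGv: "CG \<subseteq> gverts k" using CGd by blast
  have inv: "eta_hat ` CG = CG" if "eta_hat ` CG \<subseteq> CG"
  proof
    show "CG \<subseteq> eta_hat ` CG"
    proof
      fix v assume "v \<in> CG"
      then have "eta_hat v \<in> CG" using that by blast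
      then show "v \<in> eta_hat ` CG" by (metis eta_hat_eta_hat image_eqI)
    qed
  qed (rule that)
  have bc: "eta_hat ` CG = CG \<longleftrightarrow> I = J"
  proof
    assume h: "eta_hat ` CG = CG"
    have "(\<not> b, i) \<in> CG" if "(b, i) \<in> CG" for b i
      using h that unfolding eta_hat_def by (metis fst_conv image_eqI snd_conv)
    then show "I = J" unfolding I_def J_def by fastforce
  next
    assume h: "I = J"
    have "eta_hat ` CG \<subseteq> CG"
    proof
      fix w assume "w \<in> eta_hat ` CG"
      then obtain b i where "(b, i) \<in> CG" "w = (\<not> b, i)" unfolding eta_hat_def by force
      then show "w \<in> CG" using h unfolding I_def J_def by (cases b) auto
    qed
    then show "eta_hat ` CG = CG" by (rule inv)
  qed
  have cd: "I \<inter> J \<noteq> {}" if "I = J"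
  proof -
    obtain b i where "v0 = (b, i)" by force
    then have "i \<in> I \<union> J" using v0CG unfolding I_def J_def by (cases b) auto
    then show ?thesis using that by blast
  qed
  have dc: "eta_hat ` CG = CG" if ne: "I \<inter> J \<noteq> {}"
  proof -
    obtain i where "i \<in> I" "i \<in> J" using ne by blast
    then have i: "(False, i) \<in> CG" "(True, i) \<in> CG" unfolding I_def J_def by simp_all
    have p1: "(v0, (False, i)) \<in> E\<^sup>*" "(v0, (True, i)) \<in> E\<^sup>*" using i CGd by auto
    have rtrE: "(eta_hat u, eta_hat w) \<in> E\<^sup>*" if "(u, w) \<in> E\<^sup>*" for u w
    proof -
      have "(u, w) \<in> (gedges k \<Omega> X S)\<^sup>*" using that unfolding E_def .
      from rtr_eta[where S=S, OF S this] show ?thesis unfolding E_def .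
    qed
    have q1: "(eta_hat v0, eta_hat (False, i)) \<in> E\<^sup>*" using rtrE[OF p1(1)] .
    have "eta_hat (False, i) = (True, i)" unfolding eta_hat_def by simp
    with q1 have q2: "(eta_hat v0, (True, i)) \<in> E\<^sup>*" by simp
    have q3: "((True, i), v0) \<in> E\<^sup>*" using rtr_sym[of v0 "(True, i)"] p1(2) unfolding E_def .
    have "(eta_hat v0, v0) \<in> E\<^sup>*" using rtrancl_trans[OF q2 q3] .
    then have vv: "(v0, eta_hat v0) \<in> E\<^sup>*" unfolding E_def by (rule rtr_sym)
    have "eta_hat ` CG \<subseteq> CG"
    proof
      fix w assume "w \<in> eta_hat ` CG"
      then obtain u where u: "u \<in> CG" "w = eta_hat u" by blast
      then have r: "(v0, u) \<in> E\<^sup>*" and ug: "u \<in> gverts k" using CGd by auto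
      have r2: "(eta_hat v0, w) \<in> E\<^sup>*" using rtrE[OF r] u(2) by simp
      have wg: "w \<in> gverts k" using ug u(2) unfolding gverts_def eta_hat_def by auto
      have "(v0, w) \<in> E\<^sup>*" using rtrancl_trans[OF vv r2] .
      then show "w \<in> CG" using wg CGd by simp
    qed
    then show ?thesis by (rule inv)
  qed
  define cl where "cl = wclass k \<Omega> X S"
  have wc: "weta (cl p) = cl (fl p)" for p
    unfolding weta_fl cl_def using wclass_fl[OF S] by simp
  have copy_in: "cl (b, y) \<in> C\<Sigma>" if "(b, i) \<in> CG" "y \<in> \<Omega> i" for b i y
  proof -
    have "cl (b, y) \<in> wcopy k \<Omega> X S (b, i)" unfolding wcopy_def cl_def using that by auto
    then show ?thesis using assms(4) that(1) by blast
  qed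
  have ab: "eta_hat ` CG = CG" if h: "weta ` C\<Sigma> = C\<Sigma>"
  proof -
    have "eta_hat ` CG \<subseteq> CG"
    proof
      fix w assume "w \<in> eta_hat ` CG"
      then obtain b i where bi: "(b, i) \<in> CG" "w = (\<not> b, i)" unfolding eta_hat_def by force
      have ik: "i \<in> {1..k}" using bi CGv unfolding gverts_def by auto
      obtain y where y: "y \<in> \<Omega> i" using nonemp ik by blast
      have yD: "y \<in> wD k \<Omega>" unfolding wD_def using y ik by blast
      have "weta (cl (b, y)) \<in> C\<Sigma>" using copy_in[OF bi(1) y] h by blast
      then have c1: "cl (\<not> b, y) \<in> C\<Sigma>" using wc[of "(b, y)"] by (simp add: fl_def)
      have self: "wrel k \<Omega> X S (\<not> b, y) (\<not> b, y)" unfolding wrel_def by simp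
      have c2: "cl (\<not> b, y) \<notin> wseam k \<Omega> X S"
      proof
        assume "cl (\<not> b, y) \<in> wseam k \<Omega> X S"
        then obtain x where x: "x \<in> wB k \<Omega> X" "cl (\<not> b, y) = cl (False, x)"
          unfolding wseam_def cl_def by blast
        have "(\<not> b, y) \<in> cl (\<not> b, y)" unfolding cl_def
          by (rule wclass_self) (use yD in \<open>simp add: wpts_def\<close>)
        then have "wrel k \<Omega> X S (False, x) (\<not> b, y)" using x(2) unfolding cl_def wclass_def by auto
        then have "(False, x) = (\<not> b, y)" by (rule wi[OF yD])
        then show False using x(1) wD_wB[OF yD] by auto
      qed
      from c1 c2 assms(4) obtain u where u: "u \<in> CG" "cl (\<not> b, y) \<in> wcopy k \<Omega> X S u" by blast
      then obtain y' where y': "y' \<in> \<Omega> (snd u)" "cl (\<not> b, y) = cl (fst u, y')"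
        unfolding wcopy_def cl_def by auto
      have "(\<not> b, y) \<in> cl (\<not> b, y)" unfolding cl_def
        by (rule wclass_self) (use yD in \<open>simp add: wpts_def\<close>)
      then have "wrel k \<Omega> X S (fst u, y') (\<not> b, y)" using y'(2) unfolding cl_def wclass_def by auto
      then have e: "(fst u, y') = (\<not> b, y)" by (rule wi[OF yD])
      have uk: "snd u \<in> {1..k}" using u(1) CGv unfolding gverts_def by auto
      have "snd u = i" using disj uk ik y y' e by blast
      then have "u = w" using e bi(2) by (cases u) auto
      then show "w \<in> CG" using u(1) by simp
    qed
    then show ?thesis by (rule inv)
  qed
  have ba: "weta ` C\<Sigma> = C\<Sigma>" if h: "eta_hat ` CG = CG"
  proof -
    have conn: "connectedin (welded_surface k \<Omega> X S) C\<Sigma>"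
      using assms(2) by (rule connectedin_connected_components_of)
    have cont: "continuous_map (welded_surface k \<Omega> X S) (welded_surface k \<Omega> X S) weta"
      using weta_cont[OF S] .
    have conn2: "connectedin (welded_surface k \<Omega> X S) (weta ` C\<Sigma>)"
      using connectedin_continuous_map_image[OF cont conn] .
    obtain b i where bi: "v0 = (b, i)" by force
    have ik: "i \<in> {1..k}" using bi v0 unfolding gverts_def by auto
    obtain y where y: "y \<in> \<Omega> i" using nonemp ik by blast
    have c0: "cl (b, y) \<in> C\<Sigma>" using copy_in v0CG bi y by blast
    have "eta_hat v0 \<in> CG" using h v0CG by blast
    then have "(\<not> b, i) \<in> CG" using bi unfolding eta_hat_def by simp
    then have c1: "cl (\<not> b, y) \<in> C\<Sigma>" using copy_in y by blast
    have "cl (\<not> b, y) \<in> weta ` C\<Sigma>" using wc[of "(b, y)"] c0 by (metis fl_def fst_conv snd_conv image_eqI)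
    then have nd: "\<not> disjnt C\<Sigma> (weta ` C\<Sigma>)" using c1 unfolding disjnt_def by blast
    have sub: "weta ` C\<Sigma> \<subseteq> C\<Sigma>"
      using connected_components_of_maximal[OF assms(2) conn2 nd] .
    have "C\<Sigma> = weta ` weta ` C\<Sigma>" by (simp add: image_image weta_weta)
    also have "\<dots> \<subseteq> weta ` C\<Sigma>" using sub by blast
    finally show ?thesis using sub by blast
  qed
  show ?thesis using ab ba bc cd dc by blast
qed

end
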